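(* Let $K$ be a non-Archimedean locally compact field of characteristic $p>0$ with group of 1-units $U=1+M_K$. Let $f:U\to U$ be a locally analytic group endomorphism, and suppose there is a power series $\sum_{n\ge0}a_nx^n\in 1+xK[[x]]$ with $f(1+x)=\sum_{n=0}^\infty a_nx^n$ for all $x\in M_K$. Then $a_n\in\mathbb{F}_p$ for all $n\ge0$.
   Context: $M_K$ is the maximal ideal of the ring of integers $R_K$ of $K$; with constant field $\mathbb{F}$ of order $q$ and uniformizer $\pi$, $K=\mathbb{F}((\pi))$, $U=1+\pi\mathbb{F}[[\pi]]$, and $|x|=q^{-v(x)}$. A continuous function $f$ on a ball $B_{\alpha,t}=\{u\in R_K:|u-\alpha|\le t\}$, $t=|\rho|$, is analytic there if $f(u)=\sum_{n\ge0}c_n\left(\frac{u-\alpha}{\rho}\right)^n$ with $c_n\in K$, $c_n\to0$; $f:U\to K$ is locally analytic if each $\alpha\in U$ has a ball $B_{\alpha,t_\alpha}\subset U$, $t_\alpha>0$, on which $f$ is analytic. $\mathbb{F}_p$ denotes the prime subfield of $K$. *)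

theory Defs
  imports "HOL-Computational_Algebra.Formal_Laurent_Series"
begin

text \<open>The local field K = F((pi)) of characteristic p > 0, with F a finite field,
  is modelled as the type 'a fls of formal Laurent series over a finite field 'a.
  The valuation is fls_subdegree (valuation of 0 is +infinity), and the absolute
  value is |x| = q^(-v(x)).\<close>

definition vge :: "'a::zero fls \<Rightarrow> int \<Rightarrow> bool" where
  "vge x N \<longleftrightarrow> x = 0 \<or> fls_subdegree x \<ge> N"

definition RK :: "'a::zero fls set" where
  "RK = {x. vge x 0}"

definition MK :: "'a::zero fls set" where
  "MK = {x. vge x 1}"

definition UK :: "'a::{monoid_add,one} fls set" where
  "UK = {1 + x | x. x \<in> MK}"

definition ballK :: "'a::{ab_group_add} fls \<Rightarrow> 'a fls \<Rightarrow> 'a fls set" where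
  "ballK \<alpha> \<rho> = {u \<in> RK. vge (u - \<alpha>) (fls_subdegree \<rho>)}"

definition tendstoK :: "(nat \<Rightarrow> 'a::ab_group_add fls) \<Rightarrow> 'a fls \<Rightarrow> bool" where
  "tendstoK s L \<longleftrightarrow> (\<forall>N::int. \<exists>M. \<forall>n\<ge>M. vge (s n - L) N)"

definition sumsK :: "(nat \<Rightarrow> 'a::ab_group_add fls) \<Rightarrow> 'a fls \<Rightarrow> bool" where
  "sumsK c L \<longleftrightarrow> tendstoK (\<lambda>n. \<Sum>k<n. c k) L"

definition continuous_onK :: "'a::ab_group_add fls set \<Rightarrow> ('a fls \<Rightarrow> 'a fls) \<Rightarrow> bool" where
  "continuous_onK S f \<longleftrightarrow>
     (\<forall>x\<in>S. \<forall>N::int. \<exists>M::int. \<forall>y\<in>S. vge (y - x) M \<longrightarrow> vge (f y - f x) N)"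

definition analytic_onK :: "('a::field fls \<Rightarrow> 'a fls) \<Rightarrow> 'a fls \<Rightarrow> 'a fls \<Rightarrow> bool" where
  "analytic_onK f \<alpha> \<rho> \<longleftrightarrow> continuous_onK (ballK \<alpha> \<rho>) f \<and>
     (\<exists>c :: nat \<Rightarrow> 'a fls. tendstoK c 0 \<and>
        (\<forall>u\<in>ballK \<alpha> \<rho>. sumsK (\<lambda>n. c n * ((u - \<alpha>) / \<rho>) ^ n) (f u)))"

definition locally_analyticK :: "('a::field fls \<Rightarrow> 'a fls) \<Rightarrow> bool" where
  "locally_analyticK f \<longleftrightarrow>
     (\<forall>\<alpha>\<in>UK. \<exists>\<rho>. \<rho> \<noteq> 0 \<and> ballK \<alpha> \<rho> \<subseteq> UK \<and> analytic_onK f \<alpha> \<rho>)"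

end

theory Submission imports Defs "HOL-Computational_Algebra.Polynomial" "HOL-Computational_Algebra.Primes"
begin

lemma vge_0[simp]: "vge 0 N" by (simp add: vge_def)

lemma vge_mono: "vge x N \<Longrightarrow> M \<le> N \<Longrightarrow> vge x M"
  by (auto simp: vge_def)

lemma vge_add: "vge (x::'a::ab_group_add fls) N \<Longrightarrow> vge y N \<Longrightarrow> vge (x + y) N"
proof -
  assume a: "vge x N" "vge y N"
  show ?thesis
  proof (cases "x + y = 0")
    case False
    show ?thesis
    proof (cases "x = 0 \<or> y = 0")
      case True thus ?thesis using a by auto
    next
      case F2: False
      have "fls_subdegree (x+y) \<ge> min (fls_subdegree x) (fls_subdegree y)"
        using fls_plus_subdegree False by blast
      thus ?thesis using a F2 False by (auto simp: vge_def)
    qed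
  qed (simp add: vge_def)
qed

lemma vge_uminus: "vge (- (x::'a::ab_group_add fls)) N \<longleftrightarrow> vge x N"
  by (auto simp: vge_def)

lemma vge_diff: "vge (x::'a::ab_group_add fls) N \<Longrightarrow> vge y N \<Longrightarrow> vge (x - y) N"
  using vge_add[of x N "-y"] by (simp add: vge_uminus)

lemma vge_mult: "vge (x::'a::field fls) N \<Longrightarrow> vge y M \<Longrightarrow> vge (x * y) (N + M)"
  by (cases "y = 0"; cases "x = 0") (auto simp: vge_def)

lemma vge_power: "vge (x::'a::field fls) N \<Longrightarrow> vge (x ^ n) (int n * N)"
proof (induction n)
  case 0 thus ?case by (simp add: vge_def)
next
  case (Suc n)
  have "vge (x * x^n) (N + int n * N)" using vge_mult Suc by blast
  thus ?case by (simp add: algebra_simps)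
qed

lemma vge_sum: "(\<And>i. i \<in> A \<Longrightarrow> vge (g i :: 'a::ab_group_add fls) N) \<Longrightarrow> vge (sum g A) N"
  by (induction A rule: infinite_finite_induct) (auto intro: vge_add)

lemma tendstoK_diff:
  assumes "tendstoK s L" "tendstoK t M"
  shows "tendstoK (\<lambda>n. s n - t n) (L - M)"
  unfolding tendstoK_def
proof
  fix N
  obtain M1 where 1: "\<forall>n\<ge>M1. vge (s n - L) N" using assms(1) unfolding tendstoK_def by blast
  obtain M2 where 2: "\<forall>n\<ge>M2. vge (t n - M) N" using assms(2) unfolding tendstoK_def by blast
  have "\<forall>n\<ge>max M1 M2. vge (s n - t n - (L - M)) N"
  proof (intro allI impI)
    fix n assume "n \<ge> max M1 M2"
    hence "vge (s n - L) N" "vge (t n - M) N" using 1 2 by auto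
    hence "vge ((s n - L) - (t n - M)) N" by (rule vge_diff)
    thus "vge (s n - t n - (L - M)) N" by (simp add: algebra_simps)
  qed
  thus "\<exists>M'. \<forall>n\<ge>M'. vge (s n - t n - (L - M)) N" by blast
qed

lemma char_fls_prime:
  "prime CHAR('a::{field,finite} fls)"
  using finite_imp_CHAR_pos[where 'a='a] prime_CHAR_semidom[where 'a='a] by simp

lemma minus_pow_char:
  fixes x y :: "'a::{field,finite} fls"
  shows "(x - y) ^ CHAR('a fls) = x ^ CHAR('a fls) - y ^ CHAR('a fls)"
proof -
  have "(x + (-y)) ^ CHAR('a fls) = x ^ CHAR('a fls) + (-y) ^ CHAR('a fls)"
    by (rule freshmans_dream) (use char_fls_prime in auto)
  also have "(-y) ^ CHAR('a fls) = - (y ^ CHAR('a fls))"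
    by (rule minus_power_prime_CHAR) (use char_fls_prime in auto)
  finally show ?thesis by simp
qed

lemma tendstoK_pow_char:
  fixes s :: "nat \<Rightarrow> 'a::{field,finite} fls"
  assumes "tendstoK s L"
  shows "tendstoK (\<lambda>n. s n ^ CHAR('a fls)) (L ^ CHAR('a fls))"
  unfolding tendstoK_def
proof
  fix N :: int
  let ?p = "CHAR('a fls)"
  have p1: "?p \<ge> 1" using char_fls_prime prime_ge_1_nat by blast
  obtain M where M: "\<forall>n\<ge>M. vge (s n - L) (max N 0)" using assms unfolding tendstoK_def by blast
  have "\<forall>n\<ge>M. vge (s n ^ ?p - L ^ ?p) N"
  proof (intro allI impI)
    fix n assume "n \<ge> M"
    hence "vge ((s n - L) ^ ?p) (int ?p * max N 0)" using M vge_power by blast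
    moreover have "int ?p * max N 0 \<ge> N"
    proof -
      have "int ?p * max N 0 \<ge> 1 * max N 0" using p1 by (intro mult_right_mono) auto
      thus ?thesis by simp
    qed
    ultimately show "vge (s n ^ ?p - L ^ ?p) N" using vge_mono by (metis minus_pow_char)
  qed
  thus "\<exists>M. \<forall>n\<ge>M. vge (s n ^ ?p - L ^ ?p) N" by blast
qed

lemma root_char:
  fixes c :: "'b::field"
  assumes pr: "prime CHAR('b)" and c: "c ^ CHAR('b) = c"
  shows "c \<in> range (of_nat :: nat \<Rightarrow> 'b)"
proof (rule ccontr)
  assume nc: "c \<notin> range (of_nat :: nat \<Rightarrow> 'b)"
  let ?p = "CHAR('b)"
  have p2: "?p \<ge> 2" using pr prime_ge_2_nat by blast
  define P :: "'b poly" where "P = monom 1 ?p - [:0,1:]"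
  have ev: "poly P x = x ^ ?p - x" for x by (simp add: P_def poly_monom)
  have "coeff P ?p = 1" using p2 by (simp add: P_def coeff_monom coeff_pCons split: nat.split)
  hence P0: "P \<noteq> 0" by auto
  have "degree P \<le> ?p" unfolding P_def
    by (rule degree_diff_le) (use p2 in \<open>auto simp: degree_monom_le\<close>)
  have ofn: "(of_nat i :: 'b) ^ ?p = of_nat i" for i
  proof (induction i)
    case 0 thus ?case using p2 by simp
  next
    case (Suc i)
    have "(of_nat i + 1 :: 'b) ^ ?p = of_nat i ^ ?p + 1 ^ ?p"
      by (rule freshmans_dream) (use pr in auto)
    thus ?case using Suc by (simp add: add.commute)
  qed
  have inj: "inj_on (of_nat :: nat \<Rightarrow> 'b) {..<?p}"
  proof (rule inj_onI)
    fix m n assume mn: "m \<in> {..<?p}" "n \<in> {..<?p}" "(of_nat m :: 'b) = of_nat n"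
    show "m = n"
    proof (rule ccontr)
      assume "m \<noteq> n"
      hence "m < n \<or> n < m" by auto
      thus False
      proof
        assume "m < n"
        hence "?p dvd (n - m)" using mn of_nat_eq_iff_char_dvd by blast
        moreover have "0 < n - m" "n - m < ?p" using \<open>m < n\<close> mn by auto
        ultimately show False using nat_dvd_not_less by blast
      next
        assume "n < m"
        hence "?p dvd (m - n)" using mn of_nat_eq_iff_char_dvd by metis
        moreover have "0 < m - n" "m - n < ?p" using \<open>n < m\<close> mn by auto
        ultimately show False using nat_dvd_not_less by blast
      qed
    qed
  qed
  have sub: "insert c (of_nat ` {..<?p}) \<subseteq> {x. poly P x = 0}"
    using c ofn by (auto simp: ev)
  have "card (insert c (of_nat ` {..<?p})) = ?p + 1"
  proof -
    have "c \<notin> of_nat ` {..<?p}" using nc by auto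
    hence "card (insert c (of_nat ` {..<?p})) = Suc (card (of_nat ` {..<?p} :: 'b set))"
      by (intro card_insert_disjoint) auto
    also have "card (of_nat ` {..<?p} :: 'b set) = ?p" using inj by (simp add: card_image)
    finally show ?thesis by simp
  qed
  moreover have "card (insert c (of_nat ` {..<?p})) \<le> card {x. poly P x = 0}"
    using sub poly_roots_finite[OF P0] by (rule card_mono[rotated])
  moreover have "card {x. poly P x = 0} \<le> degree P" using card_poly_roots_bound[OF P0] .
  ultimately show False using \<open>degree P \<le> ?p\<close> by linarith
qed

lemma sumsK_terms:
  assumes "sumsK c 0"
  shows "\<exists>M. \<forall>n\<ge>M. vge (c n) N"
proof -
  obtain M where M: "\<forall>n\<ge>M. vge ((\<Sum>k<n. c k) - 0) N"
    using assms unfolding sumsK_def tendstoK_def by blast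
  have "vge (c n) N" if "n \<ge> M" for n
  proof -
    have A: "vge (\<Sum>k<Suc n. c k) N" using M that by (metis diff_zero le_SucI)
    have B: "vge (\<Sum>k<n. c k) N" using M that by simp
    have "vge ((\<Sum>k<Suc n. c k) - (\<Sum>k<n. c k)) N" by (rule vge_diff[OF A B])
    thus ?thesis by simp
  qed
  thus ?thesis by blast
qed

lemma ident:
  fixes b :: "nat \<Rightarrow> 'a::field fls" and q :: nat
  assumes q: "q \<ge> 1"
    and S: "\<And>k. k \<ge> 1 \<Longrightarrow> sumsK (\<lambda>n. b n * ((fls_X^k)^q)^n) 0"
  shows "b n = 0"
proof (rule ccontr)
  assume "b n \<noteq> 0"
  define j where "j = (LEAST n. b n \<noteq> 0)"
  have bj: "b j \<noteq> 0" unfolding j_def by (rule LeastI) fact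
  have below: "b m = 0" if "m < j" for m using not_less_Least[of m "\<lambda>n. b n \<noteq> 0"] that
    unfolding j_def by blast
  define Y :: "nat \<Rightarrow> 'a fls" where "Y k = (fls_X^k)^q" for k
  have Ynz: "Y k ^ n \<noteq> 0" for k n unfolding Y_def by simp
  have Ysd: "fls_subdegree (Y k ^ n) = int n * int q * int k" for k n
    unfolding Y_def by (simp add: fls_subdegree_pow)
  obtain M where M: "\<forall>n\<ge>M. vge (b n * Y 1 ^ n) 0"
    using sumsK_terms[OF S[of 1]] unfolding Y_def by auto
  have Mv: "fls_subdegree (b n) + int n * int q \<ge> 0" if "n \<ge> M" "b n \<noteq> 0" for n
    using M that Ynz[of 1 n] Ysd[of 1 n] by (auto simp: vge_def)
  define vj where "vj = fls_subdegree (b j)"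
  define D where "D = (\<Sum>i<M. \<bar>fls_subdegree (b i)\<bar>) + \<bar>vj\<bar>"
  define k where "k = nat D + j + 2"
  define T where "T = vj + int j * int q * int k + 1"
  have D0: "D \<ge> 0" unfolding D_def by (auto intro: sum_nonneg)
  have kD: "int k = D + int j + 2" unfolding k_def using D0 by simp
  have claim: "vge (b n * Y k ^ n) T" if "j < n" for n
  proof (cases "b n = 0")
    case True thus ?thesis by simp
  next
    case False
    define vn where "vn = fls_subdegree (b n)"
    have sd: "fls_subdegree (b n * Y k ^ n) = vn + int n * int q * int k"
      using False Ynz[of k n] Ysd[of k n] by (simp add: vn_def)
    have jn: "int j + 1 \<le> int n" using that by simp
    have q1: "int q \<ge> 1" using q by simp
    have "vn + int n * int q * int k \<ge> T"
    proof (cases "n < M")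
      case True
      have "\<bar>vn\<bar> \<le> (\<Sum>i<M. \<bar>fls_subdegree (b i)\<bar>)"
        unfolding vn_def using True by (intro member_le_sum) auto
      hence vnD: "\<bar>vn\<bar> + \<bar>vj\<bar> \<le> D" unfolding D_def by simp
      have "int n * int q * int k \<ge> (int j + 1) * int q * int k"
        using jn by (intro mult_right_mono) auto
      moreover have "int q * int k \<ge> 1 * int k" using q1 by (intro mult_right_mono) auto
      ultimately have "int n * int q * int k \<ge> int j * int q * int k + int k"
        by (simp add: algebra_simps)
      thus ?thesis using vnD kD unfolding T_def by linarith
    next
      case False
      hence v0: "vn + int n * int q \<ge> 0" using Mv \<open>b n \<noteq> 0\<close> vn_def by simp
      have k1: "int k - 1 \<ge> 0" using kD D0 by simp
      have "int n * int q * (int k - 1) \<ge> (int j + 1) * int q * (int k - 1)"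
        using jn k1 by (intro mult_right_mono) auto
      moreover have "int q * (int k - int j - 1) \<ge> 1 * (int k - int j - 1)"
        using q1 kD D0 by (intro mult_right_mono) auto
      ultimately have "int n * int q * (int k - 1) \<ge> int j * int q * int k + (int k - int j - 1)"
        by (simp add: algebra_simps)
      moreover have "int n * int q * int k = int n * int q + int n * int q * (int k - 1)"
        by (simp add: algebra_simps)
      moreover have "\<bar>vj\<bar> \<le> D" unfolding D_def by (auto intro: sum_nonneg)
      ultimately show ?thesis using v0 kD unfolding T_def by linarith
    qed
    thus ?thesis using sd False Ynz[of k n] by (auto simp: vge_def)
  qed
  have k1: "k \<ge> 1" unfolding k_def by simp
  obtain N0 where N0: "\<forall>N\<ge>N0. vge ((\<Sum>i<N. b i * Y k ^ i) - 0) T"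
    using S[OF k1] unfolding sumsK_def tendstoK_def Y_def by blast
  define N where "N = max N0 (Suc j)"
  have SN: "vge (\<Sum>i<N. b i * Y k ^ i) T" using N0 N_def by auto
  have jN: "j \<in> {..<N}" unfolding N_def by auto
  have split: "(\<Sum>i<N. b i * Y k ^ i) = b j * Y k ^ j + (\<Sum>i\<in>{..<N} - {j}. b i * Y k ^ i)"
    using sum.remove[OF _ jN, of "\<lambda>i. b i * Y k ^ i"] by simp
  have rest: "vge (\<Sum>i\<in>{..<N} - {j}. b i * Y k ^ i) T"
  proof (rule vge_sum)
    fix i assume "i \<in> {..<N} - {j}"
    hence "i < j \<or> j < i" by auto
    thus "vge (b i * Y k ^ i) T" using claim below by auto
  qed
  have "vge (b j * Y k ^ j) T"
    using vge_diff[OF SN rest] split by (simp add: algebra_simps)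
  moreover have "fls_subdegree (b j * Y k ^ j) = vj + int j * int q * int k"
    using bj Ynz[of k j] Ysd[of k j] by (simp add: vj_def)
  moreover have "b j * Y k ^ j \<noteq> 0" using bj Ynz[of k j] by simp
  ultimately show False unfolding T_def vge_def by simp
qed

lemma UK_mult:
  assumes "u \<in> UK" "v \<in> UK" shows "(u * v :: 'a::field fls) \<in> UK"
proof -
  obtain x where x: "u = 1 + x" "vge x 1"
    using assms(1) unfolding UK_def MK_def by blast
  obtain y where y: "v = 1 + y" "vge y 1"
    using assms(2) unfolding UK_def MK_def by blast
  have "vge (x * y) (1 + 1)" using x y by (intro vge_mult)
  hence "vge (x * y) 1" by (rule vge_mono) simp
  hence "vge (x + y + x * y) 1" using x y by (intro vge_add)
  hence z: "x + y + x * y \<in> MK" unfolding MK_def by blast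
  have uv: "u * v = 1 + (x + y + x * y)" unfolding x y by (simp add: algebra_simps)
  show ?thesis unfolding UK_def
    by (rule CollectI, rule exI[of _ "x + y + x * y"], rule conjI[OF uv z])
qed

lemma hom_pow:
  fixes f :: "'a::field fls \<Rightarrow> 'a fls"
  assumes hom: "\<And>u v. u \<in> UK \<Longrightarrow> v \<in> UK \<Longrightarrow> f (u * v) = f u * (f v :: 'a::field fls)"
    and u: "u \<in> UK"
  shows "u ^ Suc n \<in> UK \<and> f (u ^ Suc n) = f u ^ Suc n"
proof (induction n)
  case 0 show ?case unfolding power_Suc power_0 mult_1_right by (rule conjI[OF u refl])
next
  case (Suc n)
  have IH1: "u ^ Suc n \<in> UK" using Suc by (rule conjunct1)
  have IH2: "f (u ^ Suc n) = f u ^ Suc n" using Suc by (rule conjunct2)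
  have m: "u * u ^ Suc n \<in> UK" by (rule UK_mult[OF u IH1])
  have "f (u * u ^ Suc n) = f u * f (u ^ Suc n)" by (rule hom[OF u IH1])
  also have "\<dots> = f u * f u ^ Suc n" by (simp only: IH2)
  finally have h: "f (u * u ^ Suc n) = f u * f u ^ Suc n" .
  show ?case unfolding power_Suc[of u "Suc n"] power_Suc[of "f u" "Suc n"] using m h by (rule conjI)
qed

theorem lemma2p1:
  fixes f :: "'a::{field,finite} fls \<Rightarrow> 'a fls"
    and a :: "nat \<Rightarrow> 'a fls"
  assumes maps: "\<And>u. u \<in> UK \<Longrightarrow> f u \<in> UK"
    and hom: "\<And>u v. u \<in> UK \<Longrightarrow> v \<in> UK \<Longrightarrow> f (u * v) = f u * f v"
    and la: "locally_analyticK f"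
    and a0: "a 0 = 1"
    and ser: "\<And>x. x \<in> MK \<Longrightarrow> sumsK (\<lambda>n. a n * x ^ n) (f (1 + x))"
  shows "\<forall>n. a n \<in> range (of_nat :: nat \<Rightarrow> 'a fls)"
proof
  fix n
  let ?p = "CHAR('a fls)"
  have pr: "prime ?p" by (rule char_fls_prime)
  have p1: "?p \<ge> 1" using pr prime_ge_1_nat by blast
  define b where "b n = a n - a n ^ ?p" for n
  have key: "sumsK (\<lambda>n. b n * (x ^ ?p) ^ n) 0" if x: "x \<in> MK" for x
  proof -
    have vx: "vge x 1" using x unfolding MK_def by simp
    have "vge (x ^ ?p) (int ?p * 1)" using vge_power[OF vx] .
    hence "vge (x ^ ?p) 1" by (rule vge_mono) (use p1 in simp)
    hence xp: "x ^ ?p \<in> MK" unfolding MK_def by simp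
    have u: "1 + x \<in> UK" using x unfolding UK_def by auto
    have fd: "(1 + x) ^ ?p = 1 ^ ?p + x ^ ?p" by (rule freshmans_dream) (use pr in auto)
    have h: "f ((1 + x) ^ Suc (?p - 1)) = f (1 + x) ^ Suc (?p - 1)"
      using hom_pow[OF hom u] by blast
    have sp: "Suc (?p - 1) = ?p" using p1 by simp
    have "f ((1 + x) ^ ?p) = f (1 + x) ^ ?p" using h by (simp only: sp)
    hence fe: "f (1 + x ^ ?p) = f (1 + x) ^ ?p" using fd by simp
    have A: "tendstoK (\<lambda>N. \<Sum>k<N. a k * (x ^ ?p) ^ k) (f (1 + x) ^ ?p)"
      using ser[OF xp] fe unfolding sumsK_def by simp
    have B0: "tendstoK (\<lambda>N. (\<Sum>k<N. a k * x ^ k) ^ ?p) (f (1 + x) ^ ?p)"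
      using ser[OF x] unfolding sumsK_def by (rule tendstoK_pow_char)
    have eq: "(\<Sum>k<N. a k * x ^ k) ^ ?p = (\<Sum>k<N. a k ^ ?p * (x ^ ?p) ^ k)" for N
    proof -
      have "(\<Sum>k<N. a k * x ^ k) ^ ?p = (\<Sum>k<N. (a k * x ^ k) ^ ?p)"
        by (rule freshmans_dream_sum) (use pr in auto)
      also have "\<dots> = (\<Sum>k<N. a k ^ ?p * (x ^ ?p) ^ k)"
        by (simp add: power_mult_distrib flip: power_mult) (simp add: mult.commute)
      finally show ?thesis .
    qed
    have B: "tendstoK (\<lambda>N. \<Sum>k<N. a k ^ ?p * (x ^ ?p) ^ k) (f (1 + x) ^ ?p)"
      using B0 by (simp only: eq)
    have "tendstoK (\<lambda>N. (\<Sum>k<N. a k * (x ^ ?p) ^ k) - (\<Sum>k<N. a k ^ ?p * (x ^ ?p) ^ k))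
            (f (1 + x) ^ ?p - f (1 + x) ^ ?p)"
      by (rule tendstoK_diff[OF A B])
    thus ?thesis unfolding sumsK_def b_def
      by (simp add: sum_subtractf[symmetric] algebra_simps)
  qed
  have "b n = 0"
  proof (rule ident[of ?p])
    show "1 \<le> ?p" by (rule p1)
    fix k :: nat assume "k \<ge> 1"
    hence "fls_X ^ k \<in> MK" unfolding MK_def vge_def by simp
    thus "sumsK (\<lambda>n. b n * ((fls_X ^ k) ^ ?p) ^ n) 0" by (rule key)
  qed
  hence "a n ^ ?p = a n" unfolding b_def by simp
  thus "a n \<in> range (of_nat :: nat \<Rightarrow> 'a fls)" using root_char pr by blast
qed

end
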